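(* Let $c_0,c_1$ be convex loops with length measures $\mu_0,\mu_1$, and suppose that for some $j\in\{0,1\}$ the loop $c_j$ is degenerate with $\mu_j=r\delta_{x_j}+r\delta_{-x_j}$ ($r>0$, $x_j\in S^1$); let $i$ be the other index. Then there exists a sequence $x_j^k\in S^1$ with $x_j^k\to x_j$ as $k\to\infty$ such that, setting $\mu_j^k:=r\delta_{x_j^k}+r\delta_{-x_j^k}$, the pair $\mu_j^k,\mu_i$ is weakly admissible for all $k$.
   Context: $S^1$ is the unit circle in $\mathbb{C}$ (identified with $\mathbb{R}/2\pi\mathbb{Z}$, arc-length measure $\mathrm{d}s$, geodesic distance $\operatorname{dist}$). A convex loop is $c\in W^{1,1}(S^1,\mathbb{C})$ with $c'\neq0$ a.e. whose image is the boundary of a convex set in $\mathbb{C}$, positively oriented; its length measure is $\mu_c:=(T_c)_\#(|c'|\,\mathrm{d}s)$, $T_c=c'/|c'|$. Degenerate means $\mu_c=r\delta_x+r\delta_{-x}$ for some $r>0$, $x\in S^1$. Two measures $\mu_0,\mu_1\in\mathcal{M}_+(S^1)$ are weakly admissible if $\mu_a(\{x\in S^1:\operatorname{dist}(x,\operatorname{supp}\mu_b)\ge\pi/2\})=0$ for $\{a,b\}=\{0,1\}$. *)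

theory Defs
  imports "HOL-Probability.Probability" "HOL-Complex_Analysis.Complex_Analysis"
begin

text \<open>A loop on S^1 is
represented (via the identification S^1 = R/2piZ) as a 2pi-periodic function
c :: real => complex; its derivative c' is the classical derivative, which for a
W^{1,1} (absolutely continuous) function exists a.e. and equals the weak derivative.\<close>

definition loop_deriv :: "(real \<Rightarrow> complex) \<Rightarrow> real \<Rightarrow> complex" where
  "loop_deriv c t = vector_derivative c (at t)"

definition W11_loop :: "(real \<Rightarrow> complex) \<Rightarrow> bool" where
  "W11_loop c \<longleftrightarrow>
     (\<forall>t. c (t + 2*pi) = c t) \<and>
     loop_deriv c absolutely_integrable_on {0..2*pi} \<and>
     (\<forall>t\<in>{0..2*pi}. c t = c 0 + integral {0..t} (loop_deriv c))"

definition convex_loop :: "(real \<Rightarrow> complex) \<Rightarrow> bool" where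
  "convex_loop c \<longleftrightarrow>
     W11_loop c \<and>
     (AE t in lebesgue_on {0..2*pi}. loop_deriv c t \<noteq> 0) \<and>
     (\<exists>K. convex K \<and> c ` {0..2*pi} = frontier K \<and>
          (\<forall>z\<in>interior K. winding_number (\<lambda>u. c (2 * pi * u)) z = (1::complex)))"

definition length_measure :: "(real \<Rightarrow> complex) \<Rightarrow> complex measure" where
  "length_measure c =
     distr (density (lebesgue_on {0..2*pi}) (\<lambda>t. ennreal (cmod (loop_deriv c t))))
           borel (\<lambda>t. sgn (loop_deriv c t))"

definition two_point :: "real \<Rightarrow> complex \<Rightarrow> complex measure" where
  "two_point r x = measure_of UNIV (sets borel)
      (\<lambda>A. ennreal r * (indicator A x + indicator A (-x)))"

definition degenerate :: "(real \<Rightarrow> complex) \<Rightarrow> bool" where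
  "degenerate c \<longleftrightarrow> (\<exists>r x. r > 0 \<and> x \<in> sphere 0 1 \<and> length_measure c = two_point r x)"

definition sdist :: "complex \<Rightarrow> complex \<Rightarrow> real" where
  "sdist x y = arccos (Re (x * cnj y))"

definition sdist_set :: "complex \<Rightarrow> complex set \<Rightarrow> real" where
  "sdist_set x S = (INF y\<in>S. sdist x y)"

definition supp_S1 :: "complex measure \<Rightarrow> complex set" where
  "supp_S1 \<mu> = {x \<in> sphere 0 1. \<forall>e>0. emeasure \<mu> (ball x e \<inter> sphere 0 1) > 0}"

definition weakly_admissible :: "complex measure \<Rightarrow> complex measure \<Rightarrow> bool" where
  "weakly_admissible \<mu>0 \<mu>1 \<longleftrightarrow>
     emeasure \<mu>0 {x \<in> sphere 0 1. sdist_set x (supp_S1 \<mu>1) \<ge> pi/2} = 0 \<and>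
     emeasure \<mu>1 {x \<in> sphere 0 1. sdist_set x (supp_S1 \<mu>0) \<ge> pi/2} = 0"

end

theory Submission
  imports Defs
begin

lemma loop_facts:
  assumes "convex_loop c"
  shows "integrable (lebesgue_on {0..2*pi}) (loop_deriv c)"
    and "integral\<^sup>L (lebesgue_on {0..2*pi}) (loop_deriv c) = 0"
    and "AE t in lebesgue_on {0..2*pi}. loop_deriv c t \<noteq> 0"
proof -
  have W: "W11_loop c" and ae: "AE t in lebesgue_on {0..2*pi}. loop_deriv c t \<noteq> 0"
    using assms unfolding convex_loop_def by auto
  have ai: "loop_deriv c absolutely_integrable_on {0..2*pi}" using W unfolding W11_loop_def by blast
  show int: "integrable (lebesgue_on {0..2*pi}) (loop_deriv c)"
    using ai unfolding set_integrable_def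
    by (subst integrable_restrict_space) auto
  have per: "\<forall>t. c (t + 2*pi) = c t" and F: "\<forall>t\<in>{0..2*pi}. c t = c 0 + integral {0..t} (loop_deriv c)"
    using W unfolding W11_loop_def by blast+
  have "c (0 + 2*pi) = c 0" using per by blast
  moreover have "c (2*pi) = c 0 + integral {0..2*pi} (loop_deriv c)"
    using F[rule_format, of "2*pi"] by simp
  ultimately have "integral {0..2*pi} (loop_deriv c) = 0" by simp
  moreover have "(LINT x:{0..2*pi} | lebesgue. loop_deriv c x) = integral {0..2*pi} (loop_deriv c)"
    using ai by (rule set_lebesgue_integral_eq_integral)
  moreover have "integral\<^sup>L (lebesgue_on {0..2*pi}) (loop_deriv c) = (LINT x:{0..2*pi} | lebesgue. loop_deriv c x)"
    unfolding set_lebesgue_integral_def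
    by (subst integral_restrict_space) auto
  ultimately show "integral\<^sup>L (lebesgue_on {0..2*pi}) (loop_deriv c) = 0" by simp
  show "AE t in lebesgue_on {0..2*pi}. loop_deriv c t \<noteq> 0" by (rule ae)
qed

lemma two_point_sets[simp]: "sets (two_point r x) = sets borel"
  unfolding two_point_def using sets.sigma_sets_eq[of borel] by simp

lemma two_point_emeasure:
  assumes "A \<in> sets borel"
  shows "emeasure (two_point r x) A = ennreal r * (indicator A x + indicator A (-x))"
  unfolding two_point_def
proof (rule emeasure_measure_of_sigma)
  show "sigma_algebra UNIV (sets borel)"
    using sets.sigma_algebra_axioms[of borel] by simp
  show "positive (sets borel) (\<lambda>A. ennreal r * (indicator A x + indicator A (- x)))"
    unfolding positive_def by simp
  show "countably_additive (sets borel) (\<lambda>A. ennreal r * (indicator A x + indicator A (- x)))"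
    unfolding countably_additive_def
  proof (intro allI impI)
    fix F :: "nat \<Rightarrow> complex set" assume "range F \<subseteq> sets borel" and df: "disjoint_family F"
      and "\<Union> (range F) \<in> sets borel"
    have "(\<Sum>i. ennreal r * (indicator (F i) x + indicator (F i) (- x))) =
          ennreal r * (\<Sum>i. (indicator (F i) x + indicator (F i) (- x)))"
      by (rule ennreal_suminf_cmult)
    also have "(\<Sum>i. (indicator (F i) x + indicator (F i) (- x) :: ennreal)) =
          (\<Sum>i. indicator (F i) x) + (\<Sum>i. indicator (F i) (- x))"
      by (rule suminf_add[symmetric]) auto
    also have "\<dots> = indicator (\<Union>i. F i) x + indicator (\<Union>i. F i) (- x)"
      using suminf_indicator[OF df] by simp
    finally show "(\<Sum>i. ennreal r * (indicator (F i) x + indicator (F i) (- x))) =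
         ennreal r * (indicator (\<Union> (range F)) x + indicator (\<Union> (range F)) (- x))" by simp
  qed
qed (rule assms)

lemma key:
  fixes c :: "real \<Rightarrow> complex" and y :: complex
  assumes cl: "convex_loop c" and y: "norm y = 1"
    and a1: "emeasure (length_measure c) {\<i>*y} = 0"
    and a2: "emeasure (length_measure c) {-(\<i>*y)} = 0"
  shows "\<exists>w\<in>supp_S1 (length_measure c). Re (w * cnj y) > 0"
proof (rule ccontr)
  assume neg: "\<not> (\<exists>w\<in>supp_S1 (length_measure c). Re (w * cnj y) > 0)"
  define L where "L = lebesgue_on {0..2*pi}"
  define d where "d = loop_deriv c"
  define \<mu> where "\<mu> = length_measure c"
  define g where "g = (\<lambda>t. ennreal (cmod (d t)))"
  have int: "integrable L d" and int0: "integral\<^sup>L L d = 0" and ae: "AE t in L. d t \<noteq> 0"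
    using loop_facts[OF cl] unfolding L_def d_def by auto
  have dm[measurable]: "d \<in> borel_measurable L" using int by (rule borel_measurable_integrable)
  have gm[measurable]: "g \<in> borel_measurable L" unfolding g_def by measurable
  have Tm[measurable]: "(\<lambda>t. sgn (d t)) \<in> borel_measurable L"
    unfolding sgn_div_norm by measurable
  have mu: "\<mu> = distr (density L g) borel (\<lambda>t. sgn (d t))"
    unfolding \<mu>_def length_measure_def L_def g_def d_def by simp
  have sets_mu[simp]: "sets \<mu> = sets borel" unfolding mu by simp
  have space_mu[simp]: "space \<mu> = UNIV" unfolding mu by simp
  define F where "F = {ball w e | w e. e > 0 \<and> emeasure \<mu> (ball w e \<inter> sphere 0 1) = 0}"
  have "\<And>S. S \<in> F \<Longrightarrow> open S" unfolding F_def by auto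
  then obtain F' where F': "F' \<subseteq> F" "countable F'" "\<Union>F' = \<Union>F" by (rule Lindelof)
  have N: "(\<Union>B\<in>F'. B \<inter> sphere 0 1) \<in> null_sets \<mu>"
  proof (rule null_sets_UN')
    show "countable F'" by fact
    fix B assume "B \<in> F'"
    then have "B \<in> F" using F' by auto
    then obtain w e where B: "B = ball w e" "emeasure \<mu> (ball w e \<inter> sphere 0 1) = 0"
      unfolding F_def by auto
    have "ball w e \<inter> sphere 0 1 \<in> sets \<mu>" by simp
    then show "B \<inter> sphere 0 1 \<in> null_sets \<mu>" using B by (simp add: null_sets_def)
  qed
  have N1: "{\<i>*y} \<in> null_sets \<mu>" using a1 unfolding \<mu>_def[symmetric] by (simp add: null_sets_def)
  have N2: "{-(\<i>*y)} \<in> null_sets \<mu>" using a2 unfolding \<mu>_def[symmetric] by (simp add: null_sets_def)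
  have "(\<Union>B\<in>F'. B \<inter> sphere 0 1) \<union> {\<i>*y} \<union> {-(\<i>*y)} \<in> null_sets \<mu>"
    using N N1 N2 by (intro null_sets.Un)
  moreover have "{z \<in> space \<mu>. \<not> (z \<noteq> \<i>*y \<and> z \<noteq> -(\<i>*y) \<and> (norm z = 1 \<longrightarrow> Re (z * cnj y) < 0))}
      \<subseteq> (\<Union>B\<in>F'. B \<inter> sphere 0 1) \<union> {\<i>*y} \<union> {-(\<i>*y)}"
  proof
    fix z assume "z \<in> {z \<in> space \<mu>. \<not> (z \<noteq> \<i>*y \<and> z \<noteq> -(\<i>*y) \<and> (norm z = 1 \<longrightarrow> Re (z * cnj y) < 0))}"
    then consider "z = \<i>*y" | "z = -(\<i>*y)" | "norm z = 1" "z \<noteq> \<i>*y" "z \<noteq> -(\<i>*y)" "Re (z * cnj y) \<ge> 0" by fastforce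
    then show "z \<in> (\<Union>B\<in>F'. B \<inter> sphere 0 1) \<union> {\<i>*y} \<union> {-(\<i>*y)}"
    proof cases
      case 3
      note z = this
    have "Re (z * cnj y) \<noteq> 0"
    proof
      assume 0: "Re (z * cnj y) = 0"
      have "norm (z * cnj y) = 1" using z y by (simp add: norm_mult)
      then have "(Im (z * cnj y))^2 = 1" using 0 unfolding cmod_def by simp
      then have "Im (z * cnj y) = 1 \<or> Im (z * cnj y) = -1" by (simp add: power2_eq_1_iff)
      then have "z * cnj y = \<i> \<or> z * cnj y = -\<i>" using 0 by (auto simp: complex_eq_iff)
      moreover have "cnj y * y = 1" using complex_norm_square[of y] y by (simp add: mult.commute)
      then have "z * cnj y * y = z" by (simp add: mult.assoc)
      ultimately have "z = \<i>*y \<or> z = -\<i>*y" by metis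
      then show False using z by auto
    qed
    then have "Re (z * cnj y) > 0" using z by simp
    then have "z \<notin> supp_S1 \<mu>" using neg unfolding \<mu>_def by auto
    then obtain e where e: "e > 0" "\<not> emeasure \<mu> (ball z e \<inter> sphere 0 1) > 0"
      using z unfolding supp_S1_def by auto
    then have "ball z e \<in> F" unfolding F_def by (auto simp: not_less)
    then have "z \<in> \<Union>F" using e(1) by (metis UnionI centre_in_ball)
      then have "z \<in> \<Union>F'" using F' by simp
    then show "z \<in> (\<Union>B\<in>F'. B \<inter> sphere 0 1) \<union> {\<i>*y} \<union> {-(\<i>*y)}" using z by auto
    qed auto
  qed
  ultimately have AEmu: "AE z in \<mu>. z \<noteq> \<i>*y \<and> z \<noteq> -(\<i>*y) \<and> (norm z = 1 \<longrightarrow> Re (z * cnj y) < 0)"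
    by (rule AE_I')
  have "AE t in density L g. sgn (d t) \<noteq> \<i>*y \<and> sgn (d t) \<noteq> -(\<i>*y) \<and> (norm (sgn (d t)) = 1 \<longrightarrow> Re (sgn (d t) * cnj y) < 0)"
    using AEmu unfolding mu by (subst (asm) AE_distr_iff) auto
  then have "AE t in L. 0 < g t \<longrightarrow> (sgn (d t) \<noteq> \<i>*y \<and> sgn (d t) \<noteq> -(\<i>*y) \<and> (norm (sgn (d t)) = 1 \<longrightarrow> Re (sgn (d t) * cnj y) < 0))"
    by (subst (asm) AE_density) auto
  then have neg_ae: "AE t in L. Re (d t * cnj y) < 0"
    using ae
  proof eventually_elim
    case (elim t)
    have "0 < g t" using elim(2) unfolding g_def by simp
    then have "Re (sgn (d t) * cnj y) < 0" using elim by (simp add: norm_sgn)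
    moreover have deq: "d t = of_real (cmod (d t)) * sgn (d t)" using elim(2) by (simp add: sgn_div_norm scaleR_conv_of_real field_simps)
    moreover have "Re (d t * cnj y) = cmod (d t) * Re (sgn (d t) * cnj y)"
      by (subst (1) deq) (simp add: mult.assoc)
    moreover have "cmod (d t) > 0" using elim(2) by simp
    ultimately show ?case by (simp add: mult_pos_neg)
  qed
  have bl: "bounded_linear (\<lambda>z. Re (z * cnj y))"
    using bounded_linear_compose[OF bounded_linear_Re bounded_linear_mult_left[of "cnj y"]]
    by (simp add: o_def)
  have "has_bochner_integral L d 0"
    using has_bochner_integral_integrable[OF int] int0 by simp
  from has_bochner_integral_bounded_linear[OF bl this]
  have "has_bochner_integral L (\<lambda>t. Re (d t * cnj y)) 0" by simp
  then have "has_bochner_integral L (\<lambda>t. - Re (d t * cnj y)) 0"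
    using has_bochner_integral_minus by fastforce
  then have hi: "integrable L (\<lambda>t. - Re (d t * cnj y))" and h0: "integral\<^sup>L L (\<lambda>t. - Re (d t * cnj y)) = 0"
    by (auto simp: has_bochner_integral_iff)
  have "AE t in L. 0 \<le> - Re (d t * cnj y)" using neg_ae by eventually_elim simp
  from integral_nonneg_eq_0_iff_AE[OF hi this] h0
  have "AE t in L. - Re (d t * cnj y) = 0" by simp
  with neg_ae have "AE t in L. False" by eventually_elim simp
  then have "emeasure L (space L) = 0" using ae_filter_eq_bot_iff[of L] eventually_False[of "ae_filter L"] by simp
  moreover have "emeasure L (space L) = emeasure lebesgue {0..2*pi}"
    unfolding L_def by (simp add: emeasure_restrict_space)
  ultimately show False by simp
qed


lemma perp:
  fixes z y :: complex
  assumes "norm z = 1" "norm y = 1" "Re (z * cnj y) = 0"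
  shows "z = \<i>*y \<or> z = -(\<i>*y)"
proof -
  have "norm (z * cnj y) = 1" using assms by (simp add: norm_mult)
  then have "(Im (z * cnj y))^2 = 1" using assms(3) unfolding cmod_def by simp
  then have "Im (z * cnj y) = 1 \<or> Im (z * cnj y) = -1" by (simp add: power2_eq_1_iff)
  then have "z * cnj y = \<i> \<or> z * cnj y = -\<i>" using assms(3) by (auto simp: complex_eq_iff)
  moreover have "cnj y * y = 1" using complex_norm_square[of y] assms(2) by (simp add: mult.commute)
  then have "z * cnj y * y = z" by (simp add: mult.assoc)
  ultimately show ?thesis by (metis mult_minus_left)
qed

lemma arccos_lt_half: "0 < t \<Longrightarrow> t \<le> 1 \<Longrightarrow> arccos t < pi/2"
  using arccos_less_arccos[of 0 t] by simp

lemma Re_bound: "norm x = 1 \<Longrightarrow> norm w = 1 \<Longrightarrow> \<bar>Re (x * cnj w)\<bar> \<le> 1"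
  using abs_Re_le_cmod[of "x * cnj w"] by (simp add: norm_mult)

lemma sdist_set_le:
  assumes "w \<in> S" "S \<subseteq> sphere 0 1" "norm x = 1"
  shows "sdist_set x S \<le> sdist x w"
  unfolding sdist_set_def
proof (rule cInf_lower)
  show "sdist x w \<in> sdist x ` S" using assms by simp
  show "bdd_below (sdist x ` S)"
  proof (rule bdd_belowI[of _ 0])
    fix v assume "v \<in> sdist x ` S"
    then obtain u where u: "u \<in> S" "v = sdist x u" by auto
    then have "\<bar>Re (x * cnj u)\<bar> \<le> 1" using Re_bound[of x u] assms by auto
    then show "0 \<le> v" using u(2) unfolding sdist_def by (simp add: arccos_lbound abs_le_iff)
  qed
qed

lemma supp_sphere: "supp_S1 \<mu> \<subseteq> sphere 0 1" unfolding supp_S1_def by auto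

lemma supp_two_point:
  assumes "r > 0" "norm y = 1"
  shows "y \<in> supp_S1 (two_point r y)" "-y \<in> supp_S1 (two_point r y)"
proof -
  have "0 < emeasure (two_point r y) (ball z e \<inter> sphere 0 1)" if "e > 0" "z = y \<or> z = -y" for z e
  proof -
    have m: "ball z e \<inter> sphere 0 1 \<in> sets borel" by simp
    have "z \<in> ball z e \<inter> sphere 0 1" using that assms by (auto simp: norm_minus_cancel)
    then have "(1::ennreal) \<le> indicator (ball z e \<inter> sphere 0 1) y + indicator (ball z e \<inter> sphere 0 1) (-y)"
      using that by (auto simp: indicator_def)
    then have "ennreal r * 1 \<le> ennreal r * (indicator (ball z e \<inter> sphere 0 1) y + indicator (ball z e \<inter> sphere 0 1) (-y))"
      by (rule mult_left_mono) simp
    then have "ennreal r \<le> ennreal r * (indicator (ball z e \<inter> sphere 0 1) y + indicator (ball z e \<inter> sphere 0 1) (-y))"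
      by simp
    then show ?thesis using assms(1) two_point_emeasure[OF m, of r y]
      by (metis ennreal_eq_0_iff not_gr_zero order_le_less_trans order_less_le not_le zero_less_iff_neq_zero)
  qed
  then show "y \<in> supp_S1 (two_point r y)" "-y \<in> supp_S1 (two_point r y)"
    unfolding supp_S1_def using assms by auto
qed

lemma adm:
  fixes c :: "real \<Rightarrow> complex" and y :: complex
  assumes cl: "convex_loop c" and y: "norm y = 1" and r: "r > 0"
    and a1: "emeasure (length_measure c) {\<i>*y} = 0"
    and a2: "emeasure (length_measure c) {-(\<i>*y)} = 0"
  shows "weakly_admissible (two_point r y) (length_measure c)"
  unfolding weakly_admissible_def
proof
  define \<mu> where "\<mu> = length_measure c"
  have sets_mu[simp]: "sets \<mu> = sets borel" unfolding \<mu>_def length_measure_def by simp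
  obtain w1 where w1: "w1 \<in> supp_S1 \<mu>" "Re (w1 * cnj y) > 0"
    using key[OF cl y a1 a2] unfolding \<mu>_def by auto
  have y': "norm (-y) = 1" using y by simp
  have b1: "emeasure (length_measure c) {\<i>*(-y)} = 0" using a2 by simp
  have b2: "emeasure (length_measure c) {-(\<i>*(-y))} = 0" using a1 by simp
  obtain w2 where w2: "w2 \<in> supp_S1 \<mu>" "Re (w2 * cnj (-y)) > 0"
    using key[OF cl y' b1 b2] unfolding \<mu>_def by blast
  define A where "A = {x \<in> sphere 0 1. sdist_set x (supp_S1 \<mu>) \<ge> pi/2}"
  have "y \<notin> A"
  proof -
    have "sdist_set y (supp_S1 \<mu>) \<le> sdist y w1" using w1 supp_sphere y by (intro sdist_set_le) auto
    also have "\<dots> < pi/2" unfolding sdist_def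
    proof (rule arccos_lt_half)
      have "Re (y * cnj w1) = Re (w1 * cnj y)" by (simp add: algebra_simps)
      then show "0 < Re (y * cnj w1)" using w1 by (simp add: mult.commute)
      have "norm w1 = 1" using w1(1) supp_sphere[of \<mu>] by auto
      then show "Re (y * cnj w1) \<le> 1" using Re_bound[of y w1] y abs_le_D1 by blast
    qed
    finally show ?thesis unfolding A_def by auto
  qed
  moreover have "-y \<notin> A"
  proof -
    have "sdist_set (-y) (supp_S1 \<mu>) \<le> sdist (-y) w2" using w2 supp_sphere y by (intro sdist_set_le) auto
    also have "\<dots> < pi/2" unfolding sdist_def
    proof (rule arccos_lt_half)
      have "Re ((-y) * cnj w2) = Re (w2 * cnj (-y))" by (simp add: algebra_simps)
      then show "0 < Re ((-y) * cnj w2)" using w2 by (simp add: mult.commute)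
      have "norm w2 = 1" using w2(1) supp_sphere[of \<mu>] by auto
      then show "Re ((-y) * cnj w2) \<le> 1" using Re_bound[of "-y" w2] y' abs_le_D1 by blast
    qed
    finally show ?thesis unfolding A_def by auto
  qed
  ultimately have "emeasure (two_point r y) A = 0"
  proof (cases "A \<in> sets borel")
    case True
    have "indicator A y = (0::ennreal)" "indicator A (-y) = (0::ennreal)"
      using \<open>y \<notin> A\<close> \<open>-y \<notin> A\<close> by (simp_all add: indicator_def)
    then show ?thesis using two_point_emeasure[OF True, of r y] by simp
  next
    case False
    then have "A \<notin> sets (two_point r y)" by simp
    then show ?thesis by (rule emeasure_notin_sets)
  qed
  then show "emeasure (two_point r y) {x \<in> sphere 0 1. sdist_set x (supp_S1 (length_measure c)) \<ge> pi/2} = 0"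
    unfolding A_def \<mu>_def .
  define B where "B = {x \<in> sphere 0 1. sdist_set x (supp_S1 (two_point r y)) \<ge> pi/2}"
  have "B \<subseteq> {\<i>*y, -(\<i>*y)}"
  proof
    fix x assume "x \<in> B"
    then have x: "norm x = 1" "sdist_set x (supp_S1 (two_point r y)) \<ge> pi/2" unfolding B_def by auto
    have ge1: "pi/2 \<le> sdist x y" using x(2) sdist_set_le[OF supp_two_point(1)[OF r y] supp_sphere x(1)] by linarith
    have le1: "Re (x * cnj y) \<le> 1" using Re_bound[OF x(1) y] by (simp add: abs_le_iff)
    have 1: "Re (x * cnj y) \<le> 0"
    proof (rule ccontr)
      note ge = ge1 and le = le1
      assume "\<not> Re (x * cnj y) \<le> 0"
      then have "Re (x * cnj y) > 0" by simp
      then have "arccos (Re (x * cnj y)) < pi/2" using arccos_lt_half le by blast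
      with ge show False unfolding sdist_def by simp
    qed
    have ge2: "pi/2 \<le> sdist x (-y)" using x(2) sdist_set_le[OF supp_two_point(2)[OF r y] supp_sphere x(1)] by linarith
    have le2: "Re (x * cnj (-y)) \<le> 1" using Re_bound[OF x(1) y'] by (simp add: abs_le_iff)
    have 2: "Re (x * cnj (-y)) \<le> 0"
    proof (rule ccontr)
      note ge = ge2 and le = le2
      assume "\<not> Re (x * cnj (-y)) \<le> 0"
      then have "Re (x * cnj (-y)) > 0" by simp
      then have "arccos (Re (x * cnj (-y))) < pi/2" using arccos_lt_half le by blast
      with ge show False unfolding sdist_def by simp
    qed
    have "Re (x * cnj y) = 0" using 1 2 by simp
    then show "x \<in> {\<i>*y, -(\<i>*y)}" using perp[OF x(1) y] by auto
  qed
  moreover have "{\<i>*y, -(\<i>*y)} \<in> sets \<mu>" by simp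
  ultimately have "emeasure \<mu> B \<le> emeasure \<mu> {\<i>*y, -(\<i>*y)}" by (rule emeasure_mono)
  also have "\<dots> \<le> emeasure \<mu> {\<i>*y} + emeasure \<mu> {-(\<i>*y)}"
    proof -
    have "{\<i>*y, -(\<i>*y)} = {\<i>*y} \<union> {-(\<i>*y)}" by auto
    moreover have "{\<i>*y} \<in> sets \<mu>" "{-(\<i>*y)} \<in> sets \<mu>" by simp_all
    ultimately show ?thesis using emeasure_subadditive by metis
  qed
  also have "\<dots> = 0" using a1 a2 unfolding \<mu>_def by simp
  finally show "emeasure (length_measure c) {x \<in> sphere 0 1. sdist_set x (supp_S1 (two_point r y)) \<ge> pi/2} = 0"
    unfolding B_def[symmetric] \<mu>_def[symmetric] by simp
qed


lemma lm_finite: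
  assumes "convex_loop c"
  shows "finite_measure (length_measure c)"
proof -
  define L where "L = lebesgue_on {0..2*pi}"
  define d where "d = loop_deriv c"
  have int: "integrable L d" using loop_facts[OF assms] unfolding L_def d_def by auto
  have dm[measurable]: "d \<in> borel_measurable L" using int by (rule borel_measurable_integrable)
  have Tm[measurable]: "(\<lambda>t. sgn (d t)) \<in> borel_measurable L"
    unfolding sgn_div_norm by measurable
  have "emeasure (density L (\<lambda>t. ennreal (cmod (d t)))) (space (density L (\<lambda>t. ennreal (cmod (d t)))))
      = (\<integral>\<^sup>+ t. ennreal (cmod (d t)) * indicator (space L) t \<partial>L)"
    by (subst emeasure_density) auto
  also have "\<dots> = (\<integral>\<^sup>+ t. ennreal (cmod (d t)) \<partial>L)"
    by (rule nn_integral_cong) simp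
  also have "\<dots> < \<infinity>" using int unfolding integrable_iff_bounded by simp
  finally have "finite_measure (density L (\<lambda>t. ennreal (cmod (d t))))"
    by (intro finite_measureI) simp
  then have "finite_measure (distr (density L (\<lambda>t. ennreal (cmod (d t)))) borel (\<lambda>t. sgn (d t)))"
    by (intro finite_measure.finite_measure_distr) auto
  then show ?thesis unfolding length_measure_def L_def d_def .
qed

lemma exp_inj: "inj_on (\<lambda>t::real. x * exp (\<i> * of_real t)) {0<..<1}" if "x \<noteq> 0"
proof (rule inj_onI)
  fix s t :: real assume s: "s \<in> {0<..<1}" and t: "t \<in> {0<..<1}"
    and eq: "x * exp (\<i> * of_real s) = x * exp (\<i> * of_real t)"
  then have "exp (\<i> * of_real s) = exp (\<i> * of_real t)" using that by simp
  then obtain n :: int where n: "\<i> * of_real s = \<i> * of_real t + (of_int (2 * n) * pi) * \<i>"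
    unfolding exp_eq by blast
  then have st: "s = t + 2 * n * pi" by (simp add: complex_eq_iff)
  show "s = t"
  proof (cases "n = 0")
    case False
    then have "\<bar>real_of_int n\<bar> \<ge> 1" by linarith
    then have "\<bar>2 * n * pi\<bar> \<ge> 2 * pi" using pi_gt_zero
      by (simp add: abs_mult mult_right_mono)
    moreover have "\<bar>s - t\<bar> < 1" using s t by auto
    ultimately show ?thesis using st pi_gt3 by simp
  qed (use st in simp)
qed


theorem lemma3p5:
  fixes c :: "nat \<Rightarrow> real \<Rightarrow> complex" and j i :: nat and r :: real and x :: complex
  assumes "convex_loop (c 0)" and "convex_loop (c 1)"
    and "j \<in> {0, 1}" and "i = 1 - j"
    and "r > 0" and "x \<in> sphere 0 1"
    and "length_measure (c j) = two_point r x"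
  shows "\<exists>xs :: nat \<Rightarrow> complex. (\<forall>k. xs k \<in> sphere 0 1) \<and> xs \<longlonglongrightarrow> x \<and>
           (\<forall>k. weakly_admissible (two_point r (xs k)) (length_measure (c i)))"
proof -
  have cl: "convex_loop (c i)" using assms(1-4) by auto
  define \<mu> where "\<mu> = length_measure (c i)"
  interpret fm: finite_measure \<mu> unfolding \<mu>_def by (rule lm_finite[OF cl])
  have sets_mu[simp]: "sets \<mu> = sets borel" unfolding \<mu>_def length_measure_def by simp
  define S0 where "S0 = {z. measure \<mu> {z} \<noteq> 0}"
  have cS0: "countable S0" unfolding S0_def by (rule fm.countable_support)
  define Bad where "Bad = {y. \<i>*y \<in> S0 \<or> -(\<i>*y) \<in> S0}"
  have "Bad \<subseteq> (\<lambda>z. -\<i>*z) ` S0 \<union> (\<lambda>z. \<i>*z) ` S0"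
  proof
    fix y assume "y \<in> Bad"
    then consider "\<i>*y \<in> S0" | "-(\<i>*y) \<in> S0" unfolding Bad_def by auto
    then show "y \<in> (\<lambda>z. -\<i>*z) ` S0 \<union> (\<lambda>z. \<i>*z) ` S0"
    proof cases
      case 1
      have "y = -\<i>*(\<i>*y)" by simp
      then show ?thesis using 1 by blast
    next
      case 2
      have "y = \<i>*(-(\<i>*y))" by simp
      then show ?thesis using 2 by blast
    qed
  qed
  then have cBad: "countable Bad" using cS0 by (meson countable_Un countable_image countable_subset)
  have x0: "x \<noteq> 0" and nx: "norm x = 1" using assms(6) by auto
  have "\<exists>t. t \<in> {0<..<inverse (real (Suc k))} \<and> x * exp (\<i> * of_real t) \<notin> Bad" for k
  proof (rule ccontr)
    assume "\<not> ?thesis"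
    then have sub: "(\<lambda>t::real. x * exp (\<i> * of_real t)) ` {0<..<inverse (real (Suc k))} \<subseteq> Bad" by auto
    have "inverse (real (Suc k)) \<le> 1" by (simp add: inverse_le_1_iff)
    then have I1: "{0<..<inverse (real (Suc k))} \<subseteq> {0<..<1}" by auto
    have "countable ((\<lambda>t::real. x * exp (\<i> * of_real t)) ` {0<..<inverse (real (Suc k))})"
      using countable_subset[OF sub cBad] .
    moreover have "inj_on (\<lambda>t::real. x * exp (\<i> * of_real t)) {0<..<inverse (real (Suc k))}"
      using inj_on_subset[OF exp_inj[OF x0] I1] .
    ultimately have "countable {0<..<inverse (real (Suc k))}" by (rule countable_image_inj_on)
    moreover have "uncountable {0<..<inverse (real (Suc k))}"
      by (subst uncountable_open_interval) simp
    ultimately show False by simp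
  qed
  then obtain tt where tt: "\<And>k. tt k \<in> {0<..<inverse (real (Suc k))}"
      "\<And>k. x * exp (\<i> * of_real (tt k)) \<notin> Bad"
    by metis
  define xs where "xs = (\<lambda>k. x * exp (\<i> * of_real (tt k)))"
  have nxs: "norm (xs k) = 1" for k unfolding xs_def using nx by (simp add: norm_mult)
  have "tt \<longlonglongrightarrow> 0"
  proof (rule tendsto_sandwich[of "\<lambda>_. 0" _ _ "\<lambda>k. inverse (real (Suc k))"])
    show "\<forall>\<^sub>F n in sequentially. 0 \<le> tt n" using tt(1) by (auto intro!: always_eventually less_imp_le)
    show "\<forall>\<^sub>F n in sequentially. tt n \<le> inverse (real (Suc n))" using tt(1) by (auto intro!: always_eventually less_imp_le)
  qed (auto intro: LIMSEQ_inverse_real_of_nat simp del: of_nat_Suc)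
  then have "(\<lambda>k. exp (\<i> * of_real (tt k))) \<longlonglongrightarrow> exp (\<i> * of_real 0)"
    by (intro tendsto_intros)
  then have "xs \<longlonglongrightarrow> x * exp (\<i> * of_real 0)" unfolding xs_def by (intro tendsto_mult tendsto_const)
  then have lim: "xs \<longlonglongrightarrow> x" by simp
  have "weakly_admissible (two_point r (xs k)) (length_measure (c i))" for k
  proof (rule adm[OF cl nxs assms(5)])
    have "xs k \<notin> Bad" using tt(2) unfolding xs_def by simp
    then have "\<i> * xs k \<notin> S0" "-(\<i> * xs k) \<notin> S0" unfolding Bad_def by auto
    then have "measure \<mu> {\<i> * xs k} = 0" "measure \<mu> {-(\<i> * xs k)} = 0" unfolding S0_def by auto
    then show "emeasure (length_measure (c i)) {\<i> * xs k} = 0" "emeasure (length_measure (c i)) {-(\<i> * xs k)} = 0"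
      unfolding \<mu>_def[symmetric] by (simp_all add: fm.emeasure_eq_measure)
  qed
  then show ?thesis using nxs lim by (intro exI[of _ xs]) auto
qed

end
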